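(* In every state $\mathbf{x}$ of the common-chunk-protocol Markov process (with $k\ge 2$ chunks and any $\lambda>0$), for every chunk $i\in\{1,\dots,k\}$, \[ r \;\ge\; \frac{2\,\bar S_i^{\,3}\, S_i}{3\,S^3}. \]
   Context: Model: Fix an integer $k\ge 2$ (number of chunks of a file) and $\lambda>0$. There is always exactly one seed holding all $k$ chunks. Non-seed peers arrive according to a Poisson process of rate $\lambda$, each arriving with no chunks; each non-seed peer holds a subset (its profile) of $\{1,\dots,k\}$ and leaves the system immediately once it holds all $k$ chunks. The state $\mathbf{x}$ of the continuous-time Markov process is the number of non-seed peers with each profile. $S$ denotes the total number of peers present, including the seed. Each non-seed peer has an independent rate-1 Poisson clock; at each tick it draws a sample of peers independently and uniformly at random with replacement from the current $S$ peers (seed and itself included) and may instantaneously download at most one chunk that it lacks and that is held by some sampled peer (such a chunk is a "match"). Counting draws with multiplicity, a chunk is "rare" in a sample of 3 draws if exactly one of the 3 draws holds it. Common chunk protocol: (i) a peer with no chunks draws 3 peers and downloads a chunk chosen uniformly among the rare matches, if there is any, otherwise nothing; (ii) a peer holding at least 1 and at most $k-2$ chunks draws 1 peer and downloads a uniformly chosen match, if any, otherwise nothing; (iii) a peer holding exactly $k-1$ chunks draws 3 peers and downloads its missing chunk only if that chunk is held by some draw and every chunk it holds is held by at least 2 of the 3 draws; otherwise nothing. Notation: $S_i$ ($1\le i\le k$) is the number of peers, including the seed, holding chunk $i$; $\bar S_i=S-S_i$. $r=r(\mathbf{x})$ is the total rate of download events in state $\mathbf{x}$, i.e. the sum over all non-seed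 peers of the probability that a clock tick of that peer results in a download. *)

theory Defs
  imports Complex_Main
begin

text \<open>A profile is a subset of {1..k}. A state x assigns to each
profile the number of non-seed peers with that profile; only proper subsets of
{1..k} are non-seed profiles (peers holding all chunks leave). The seed is the
unique peer with profile {1..k}.\<close>

definition profiles :: "nat \<Rightarrow> nat set set" where
  "profiles k = {A. A \<subseteq> {1..k} \<and> A \<noteq> {1..k}}"

text \<open>Number of peers (including the seed) with profile B, for B \<subseteq> {1..k}.\<close>
definition wt :: "nat \<Rightarrow> (nat set \<Rightarrow> nat) \<Rightarrow> nat set \<Rightarrow> nat" where
  "wt k x B = (if B = {1..k} then 1 else x B)"

definition totS :: "nat \<Rightarrow> (nat set \<Rightarrow> nat) \<Rightarrow> nat" where
  "totS k x = (\<Sum>B\<in>Pow {1..k}. wt k x B)"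

definition holdS :: "nat \<Rightarrow> (nat set \<Rightarrow> nat) \<Rightarrow> nat \<Rightarrow> nat" where
  "holdS k x i = (\<Sum>B\<in>{B\<in>Pow {1..k}. i \<in> B}. wt k x B)"

definition lackS :: "nat \<Rightarrow> (nat set \<Rightarrow> nat) \<Rightarrow> nat \<Rightarrow> nat" where
  "lackS k x i = totS k x - holdS k x i"

text \<open>Probability that a single uniform draw (with replacement) yields a peer of profile B.\<close>
definition drawp :: "nat \<Rightarrow> (nat set \<Rightarrow> nat) \<Rightarrow> nat set \<Rightarrow> real" where
  "drawp k x B = real (wt k x B) / real (totS k x)"

definition cnt3 :: "nat \<Rightarrow> nat set \<Rightarrow> nat set \<Rightarrow> nat set \<Rightarrow> nat" where
  "cnt3 j B1 B2 B3 = (if j \<in> B1 then 1 else 0) + (if j \<in> B2 then 1 else 0) + (if j \<in> B3 then 1 else 0)"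

text \<open>Probability that a clock tick of a peer with profile A results in a download
under the common chunk protocol.\<close>
definition dlprob :: "nat \<Rightarrow> (nat set \<Rightarrow> nat) \<Rightarrow> nat set \<Rightarrow> real" where
  "dlprob k x A =
    (if card A = 0 then
       (\<Sum>B1\<in>Pow {1..k}. \<Sum>B2\<in>Pow {1..k}. \<Sum>B3\<in>Pow {1..k}.
          drawp k x B1 * drawp k x B2 * drawp k x B3 *
          (if (\<exists>j\<in>{1..k}. j \<notin> A \<and> cnt3 j B1 B2 B3 = 1) then 1 else 0))
     else if card A \<le> k - 2 then
       (\<Sum>B\<in>Pow {1..k}. drawp k x B * (if (\<exists>j\<in>B. j \<notin> A) then 1 else 0))
     else
       (\<Sum>B1\<in>Pow {1..k}. \<Sum>B2\<in>Pow {1..k}. \<Sum>B3\<in>Pow {1..k}.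
          drawp k x B1 * drawp k x B2 * drawp k x B3 *
          (if (\<exists>j\<in>{1..k}. j \<notin> A \<and> 1 \<le> cnt3 j B1 B2 B3) \<and>
              (\<forall>j\<in>A. 2 \<le> cnt3 j B1 B2 B3) then 1 else 0)))"

definition dlrate :: "nat \<Rightarrow> (nat set \<Rightarrow> nat) \<Rightarrow> real" where
  "dlrate k x = (\<Sum>A\<in>profiles k. real (x A) * dlprob k x A)"

end

theory Submission
  imports Defs
begin

lemma triple_prod:
  fixes a b c :: "'a \<Rightarrow> real"
  shows "(\<Sum>B1\<in>P. \<Sum>B2\<in>P. \<Sum>B3\<in>P. a B1 * b B2 * c B3) = sum a P * sum b P * sum c P"
proof -
  have "sum a P * sum b P * sum c P = (\<Sum>B1\<in>P. \<Sum>B2\<in>P. a B1 * b B2) * sum c P"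
    by (simp add: sum_product)
  also have "\<dots> = (\<Sum>B1\<in>P. \<Sum>B2\<in>P. a B1 * b B2 * sum c P)"
    by (simp add: sum_distrib_right)
  also have "\<dots> = (\<Sum>B1\<in>P. \<Sum>B2\<in>P. \<Sum>B3\<in>P. a B1 * b B2 * c B3)"
    by (simp add: sum_distrib_left)
  finally show ?thesis by simp
qed

lemma key_ineq:
  fixes S Sb Si n0 :: real
  assumes "S > 0" "0 \<le> n0" "n0 \<le> Sb" "0 \<le> Si"
  shows "2 * Sb ^ 3 * Si / (3 * S ^ 3) \<le>
    n0 * (3 * (Si / S) * (n0 / S) ^ 2) + (Sb - n0) * ((Si / S) * (Sb / S) ^ 2)"
proof -
  have id: "3 * n0^3 + Sb^3/3 - n0 * Sb^2 = (n0 - Sb/3)^2 * (3*n0 + 2*Sb) + Sb^3/9"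
    by (simp add: algebra_simps power2_eq_square power3_eq_cube)
  have "0 \<le> (n0 - Sb/3)^2 * (3*n0 + 2*Sb) + Sb^3/9"
    using assms by (intro add_nonneg_nonneg mult_nonneg_nonneg) auto
  hence p: "0 \<le> 3 * n0^3 + Sb^3/3 - n0 * Sb^2" using id by simp
  have "0 \<le> Si * (3 * n0^3 + Sb^3/3 - n0 * Sb^2)" using p assms by simp
  hence q: "2 * Sb ^ 3 * Si / 3 \<le> n0 * (3 * Si * n0 ^ 2) + (Sb - n0) * (Si * Sb ^ 2)"
    by (simp add: algebra_simps power2_eq_square power3_eq_cube)
  have S3: "S^3 > 0" using assms by simp
  have "2 * Sb ^ 3 * Si / (3 * S ^ 3) = (2 * Sb ^ 3 * Si / 3) / S^3" by simp
  also have "\<dots> \<le> (n0 * (3 * Si * n0 ^ 2) + (Sb - n0) * (Si * Sb ^ 2)) / S^3"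
    by (rule divide_right_mono[OF q]) (use S3 in simp)
  also have "\<dots> = n0 * (3 * (Si / S) * (n0 / S) ^ 2) + (Sb - n0) * ((Si / S) * (Sb / S) ^ 2)"
    using assms by (simp add: field_simps power2_eq_square power3_eq_cube)
  finally show ?thesis .
qed

theorem mainTheorem3:
  fixes k :: nat and lam :: real and x :: "nat set \<Rightarrow> nat" and i :: nat
  assumes "k \<ge> 2" and "lam > 0" and "i \<in> {1..k}"
  shows "dlrate k x \<ge>
    2 * real (lackS k x i) ^ 3 * real (holdS k x i) / (3 * real (totS k x) ^ 3)"
proof -
  define P where "P = Pow {1..k}"
  define H where "H = {B\<in>P. i \<in> B}"
  define L where "L = {B\<in>P. i \<notin> B}"
  define A0 where "A0 = {1..k} - {i}"
  define S where "S = real (totS k x)"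
  define d where "d = drawp k x"
  define m where "m X = (\<Sum>B\<in>P. d B * (if B \<in> X then 1 else 0))" for X
  have finP: "finite P" unfolding P_def by simp
  have HL: "P = H \<union> L" "H \<inter> L = {}" unfolding H_def L_def by auto
  have finH: "finite H" and finL: "finite L" using finP HL by auto
  have dnn: "\<And>B. d B \<ge> 0" unfolding d_def drawp_def by simp
  have fullP: "{1..k} \<in> P" unfolding P_def by simp
  have "totS k x \<ge> wt k x {1..k}"
    unfolding totS_def using finP fullP P_def
    by (metis member_le_sum zero_le)
  hence Spos: "S > 0" unfolding S_def wt_def by simp
  have tot_split: "totS k x = holdS k x i + (\<Sum>B\<in>L. wt k x B)"
  proof -
    have "totS k x = sum (wt k x) P" unfolding totS_def P_def ..
    also have "\<dots> = sum (wt k x) H + sum (wt k x) L"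
      using HL finH finL by (simp add: sum.union_disjoint)
    also have "sum (wt k x) H = holdS k x i" unfolding holdS_def H_def P_def ..
    finally show ?thesis .
  qed
  have wtL: "\<And>B. B \<in> L \<Longrightarrow> wt k x B = x B"
    using assms(3) unfolding L_def wt_def by auto
  have lack: "lackS k x i = (\<Sum>B\<in>L. x B)"
    unfolding lackS_def using tot_split wtL by simp
  have mX: "m X = real (\<Sum>B\<in>X. wt k x B) / S" if "X \<subseteq> P" for X
  proof -
    have "m X = (\<Sum>B\<in>P \<inter> X. d B)"
      unfolding m_def by (simp add: sum.inter_restrict[OF finP] mult_ac if_distrib cong: if_cong)
    also have "P \<inter> X = X" using that by auto
    finally show ?thesis unfolding d_def drawp_def S_def
      by (simp add: sum_divide_distrib)
  qed
  have holdH: "holdS k x i = sum (wt k x) H" unfolding holdS_def H_def P_def ..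
  have mH: "m H = real (holdS k x i) / S"
    using mX[of H] HL unfolding holdH by blast
  have "sum (wt k x) L = sum x L" using wtL by (rule sum.cong[OF refl])
  hence mL: "m L = real (lackS k x i) / S"
    using mX[of L] HL lack by simp
  define dd where "dd X B = d B * (if B \<in> X then 1 else 0)" for X B
  have m_dd: "m X = sum (dd X) P" for X unfolding m_def dd_def by simp
  have ddnn: "dd X B \<ge> 0" for X B unfolding dd_def using dnn by simp
  have A0P: "A0 \<in> P" and A0L: "A0 \<in> L" and A0H: "A0 \<notin> H"
    unfolding A0_def P_def L_def H_def by auto
  have mO: "m {A0} = real (x A0) / S"
    using mX[of "{A0}"] A0P wtL[OF A0L] by simp
  have cardA0: "card A0 = k - 1" unfolding A0_def using assms(3) by simp
  have dlp_unf: "dlprob k x A = (if card A = 0 then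
       (\<Sum>B1\<in>P. \<Sum>B2\<in>P. \<Sum>B3\<in>P.
          d B1 * d B2 * d B3 *
          (if (\<exists>j\<in>{1..k}. j \<notin> A \<and> cnt3 j B1 B2 B3 = 1) then 1 else 0))
     else if card A \<le> k - 2 then
       (\<Sum>B\<in>P. d B * (if (\<exists>j\<in>B. j \<notin> A) then 1 else 0))
     else
       (\<Sum>B1\<in>P. \<Sum>B2\<in>P. \<Sum>B3\<in>P.
          d B1 * d B2 * d B3 *
          (if (\<exists>j\<in>{1..k}. j \<notin> A \<and> 1 \<le> cnt3 j B1 B2 B3) \<and>
              (\<forall>j\<in>A. 2 \<le> cnt3 j B1 B2 B3) then 1 else 0)))" for A
    unfolding dlprob_def P_def d_def by simp
  have dlp_nn: "dlprob k x A \<ge> 0" for A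
    unfolding dlp_unf using dnn by (auto intro!: sum_nonneg mult_nonneg_nonneg)
  have mH_nn: "m H \<ge> 0" and mL_le: "m L \<le> 1" and mL_nn: "m L \<ge> 0"
  proof -
    show "m H \<ge> 0" unfolding m_dd using ddnn by (simp add: sum_nonneg)
    show "m L \<ge> 0" unfolding m_dd using ddnn by (simp add: sum_nonneg)
    have "lackS k x i \<le> totS k x" unfolding lackS_def by simp
    thus "m L \<le> 1" using mL Spos unfolding S_def by simp
  qed
  have zero_case: "dlprob k x A \<ge> m H * m L ^ 2" if "A \<in> L" "card A = 0" for A
  proof -
    have "m H * m L ^ 2 = (\<Sum>B1\<in>P. \<Sum>B2\<in>P. \<Sum>B3\<in>P. dd H B1 * dd L B2 * dd L B3)"
      by (simp only: triple_prod m_dd) (simp add: power2_eq_square algebra_simps)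
    also have "\<dots> \<le> (\<Sum>B1\<in>P. \<Sum>B2\<in>P. \<Sum>B3\<in>P.
          d B1 * d B2 * d B3 *
          (if (\<exists>j\<in>{1..k}. j \<notin> A \<and> cnt3 j B1 B2 B3 = 1) then 1 else 0))"
    proof (intro sum_mono)
      fix B1 B2 B3
      show "dd H B1 * dd L B2 * dd L B3 \<le> d B1 * d B2 * d B3 *
          (if (\<exists>j\<in>{1..k}. j \<notin> A \<and> cnt3 j B1 B2 B3 = 1) then 1 else 0)"
      proof (cases "B1 \<in> H \<and> B2 \<in> L \<and> B3 \<in> L")
        case True
        hence "\<exists>j\<in>{1..k}. j \<notin> A \<and> cnt3 j B1 B2 B3 = 1"
          using assms(3) that(1) unfolding H_def L_def cnt3_def by (intro bexI[of _ i]) auto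
        thus ?thesis using True unfolding dd_def by simp
      next
        case False
        thus ?thesis unfolding dd_def using dnn by (auto intro!: mult_nonneg_nonneg)
      qed
    qed
    also have "\<dots> = dlprob k x A" unfolding dlp_unf using that by simp
    finally show ?thesis .
  qed
  have mid_case: "dlprob k x A \<ge> m H * m L ^ 2" if "A \<in> L" "card A \<noteq> 0" "card A \<le> k - 2" for A
  proof -
    have "m H * m L ^ 2 \<le> m H"
      using mH_nn mL_le mL_nn by (simp add: mult_left_le power_le_one)
    also have "m H = (\<Sum>B\<in>P. dd H B)" by (simp add: m_dd)
    also have "\<dots> \<le> (\<Sum>B\<in>P. d B * (if (\<exists>j\<in>B. j \<notin> A) then 1 else 0))"
    proof (intro sum_mono)
      fix B
      show "dd H B \<le> d B * (if (\<exists>j\<in>B. j \<notin> A) then 1 else 0)"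
        using that(1) dnn unfolding dd_def H_def L_def by auto
    qed
    also have "\<dots> = dlprob k x A" unfolding dlp_unf using that by simp
    finally show ?thesis .
  qed
  have bigA: "A = A0" if "A \<in> L" "card A \<noteq> 0" "\<not> card A \<le> k - 2" for A
  proof -
    have sub: "A \<subseteq> A0" using that(1) unfolding L_def P_def A0_def by auto
    have "card A \<ge> card A0" using that(3) cardA0 assms(1) by simp
    thus ?thesis using sub card_subset_eq[of A0 A] unfolding A0_def
      by (metis card_mono finite_Diff finite_atLeastAtMost le_antisym)
  qed
  have other_case: "dlprob k x A \<ge> m H * m L ^ 2" if "A \<in> L - {A0}" for A
    using zero_case mid_case bigA that by blast
  have A0_case: "dlprob k x A0 \<ge> 3 * m H * m {A0} ^ 2"
  proof -
    let ?O = "{A0}"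
    have "3 * m H * m {A0} ^ 2 = (\<Sum>B1\<in>P. \<Sum>B2\<in>P. \<Sum>B3\<in>P. dd H B1 * dd ?O B2 * dd ?O B3)
      + (\<Sum>B1\<in>P. \<Sum>B2\<in>P. \<Sum>B3\<in>P. dd ?O B1 * dd H B2 * dd ?O B3)
      + (\<Sum>B1\<in>P. \<Sum>B2\<in>P. \<Sum>B3\<in>P. dd ?O B1 * dd ?O B2 * dd H B3)"
      by (simp only: triple_prod m_dd) (simp add: power2_eq_square algebra_simps)
    also have "\<dots> = (\<Sum>B1\<in>P. \<Sum>B2\<in>P. \<Sum>B3\<in>P. dd H B1 * dd ?O B2 * dd ?O B3
       + dd ?O B1 * dd H B2 * dd ?O B3 + dd ?O B1 * dd ?O B2 * dd H B3)"
      by (simp add: sum.distrib)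
    also have "\<dots> \<le> (\<Sum>B1\<in>P. \<Sum>B2\<in>P. \<Sum>B3\<in>P.
          d B1 * d B2 * d B3 *
          (if (\<exists>j\<in>{1..k}. j \<notin> A0 \<and> 1 \<le> cnt3 j B1 B2 B3) \<and>
              (\<forall>j\<in>A0. 2 \<le> cnt3 j B1 B2 B3) then 1 else 0))"
    proof (intro sum_mono)
      fix B1 B2 B3
      have iH: "i \<in> B" if "B \<in> H" for B using that unfolding H_def by auto
      have cond: "(\<exists>j\<in>{1..k}. j \<notin> A0 \<and> 1 \<le> cnt3 j B1 B2 B3) \<and>
              (\<forall>j\<in>A0. 2 \<le> cnt3 j B1 B2 B3)"
        if "(B1 \<in> H \<and> B2 = A0 \<and> B3 = A0) \<or> (B1 = A0 \<and> B2 \<in> H \<and> B3 = A0)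
            \<or> (B1 = A0 \<and> B2 = A0 \<and> B3 \<in> H)"
        using that assms(3) iH unfolding cnt3_def A0_def by (intro conjI bexI[of _ i]) auto
      show "dd H B1 * dd ?O B2 * dd ?O B3 + dd ?O B1 * dd H B2 * dd ?O B3
          + dd ?O B1 * dd ?O B2 * dd H B3 \<le> d B1 * d B2 * d B3 *
          (if (\<exists>j\<in>{1..k}. j \<notin> A0 \<and> 1 \<le> cnt3 j B1 B2 B3) \<and>
              (\<forall>j\<in>A0. 2 \<le> cnt3 j B1 B2 B3) then 1 else 0)"
      proof (cases "(B1 \<in> H \<and> B2 = A0 \<and> B3 = A0) \<or> (B1 = A0 \<and> B2 \<in> H \<and> B3 = A0)
            \<or> (B1 = A0 \<and> B2 = A0 \<and> B3 \<in> H)")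
        case True
        thus ?thesis using cond[OF True] A0H unfolding dd_def by auto
      next
        case False
        thus ?thesis unfolding dd_def using dnn by (auto intro!: mult_nonneg_nonneg)
      qed
    qed
    also have "\<dots> = dlprob k x A0" unfolding dlp_unf using cardA0 assms(1) by simp
    finally show ?thesis .
  qed
  have LP: "L \<subseteq> profiles k"
    unfolding L_def P_def profiles_def using assms(3) by auto
  have "(\<Sum>A\<in>L. real (x A) * dlprob k x A) \<le> dlrate k x"
    unfolding dlrate_def using LP dlp_nn
    by (intro sum_mono2) (auto simp: profiles_def)
  have r1: "(\<Sum>A\<in>L. real (x A) * dlprob k x A) \<le> dlrate k x"
    unfolding dlrate_def using LP dlp_nn
    by (intro sum_mono2) (auto simp: profiles_def)
  have Lsplit: "(\<Sum>A\<in>L. f A) = f A0 + (\<Sum>A\<in>L - {A0}. f A)" for f :: "nat set \<Rightarrow> real"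
    using finL A0L by (simp add: sum.remove)
  have r2: "real (x A0) * (3 * m H * m {A0} ^ 2) + (\<Sum>A\<in>L - {A0}. real (x A)) * (m H * m L ^ 2)
      \<le> (\<Sum>A\<in>L. real (x A) * dlprob k x A)"
    unfolding Lsplit[of "\<lambda>A. real (x A) * dlprob k x A"] sum_distrib_right
    using A0_case other_case
    by (intro add_mono sum_mono mult_left_mono) auto
  have lackR: "real (lackS k x i) = real (x A0) + (\<Sum>A\<in>L - {A0}. real (x A))"
    using Lsplit[of "\<lambda>A. real (x A)"] lack by simp
  have sumnn: "(\<Sum>A\<in>L - {A0}. real (x A)) \<ge> 0" by (simp add: sum_nonneg)
  have "2 * real (lackS k x i) ^ 3 * real (holdS k x i) / (3 * S ^ 3) \<le>
    real (x A0) * (3 * (real (holdS k x i) / S) * (real (x A0) / S) ^ 2) +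
    (real (lackS k x i) - real (x A0)) * ((real (holdS k x i) / S) * (real (lackS k x i) / S) ^ 2)"
    using key_ineq[OF Spos, of "real (x A0)" "real (lackS k x i)" "real (holdS k x i)"] lackR sumnn
    by simp
  also have "\<dots> = real (x A0) * (3 * m H * m {A0} ^ 2) + (\<Sum>A\<in>L - {A0}. real (x A)) * (m H * m L ^ 2)"
    using mH mL mO lackR by simp
  finally show ?thesis using r1 r2 unfolding S_def by linarith
qed

end
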